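(* Let $P$ be a poset and let $\overline{down(P)}$ denote the topological closure of $down(P)=\{\downarrow x: x\in P\}$ in $\mathfrak{P}(P)$. Then $\emptyset\notin\overline{down(P)}$ if and only if $P$ is a finitely generated final segment of itself, i.e. $P=\uparrow F:=\{y\in P: f\leq y \text{ for some } f\in F\}$ for some finite $F\subseteq P$.
   Context: $\mathfrak{P}(P)$ is the power set of $P$ with the topology whose basic open sets are $O(F,G)=\{X\subseteq P: F\subseteq X,\ G\cap X=\emptyset\}$ for finite $F,G\subseteq P$. $\downarrow x=\{y\in P:y\leq x\}$. *)

theory Defs
  imports "HOL-Analysis.Analysis"
begin

definition basic_open :: "'a set \<Rightarrow> 'a set \<Rightarrow> 'a set \<Rightarrow> 'a set set" where
  "basic_open P F G = {X. X \<subseteq> P \<and> F \<subseteq> X \<and> G \<inter> X = {}}"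

definition powerset_topology :: "'a set \<Rightarrow> 'a set topology" where
  "powerset_topology P = topology_generated_by
     {basic_open P F G | F G. finite F \<and> finite G \<and> F \<subseteq> P \<and> G \<subseteq> P}"

definition down_set :: "'a set \<Rightarrow> ('a \<Rightarrow> 'a \<Rightarrow> bool) \<Rightarrow> 'a \<Rightarrow> 'a set" where
  "down_set P le x = {y \<in> P. le y x}"

definition up_set :: "'a set \<Rightarrow> ('a \<Rightarrow> 'a \<Rightarrow> bool) \<Rightarrow> 'a set \<Rightarrow> 'a set" where
  "up_set P le F = {y \<in> P. \<exists>f\<in>F. le f y}"

definition down_P :: "'a set \<Rightarrow> ('a \<Rightarrow> 'a \<Rightarrow> bool) \<Rightarrow> 'a set set" where
  "down_P P le = down_set P le ` P"

definition is_poset :: "'a set \<Rightarrow> ('a \<Rightarrow> 'a \<Rightarrow> bool) \<Rightarrow> bool" where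
  "is_poset P le \<longleftrightarrow> (\<forall>x\<in>P. le x x) \<and>
     (\<forall>x\<in>P. \<forall>y\<in>P. le x y \<and> le y x \<longrightarrow> x = y) \<and>
     (\<forall>x\<in>P. \<forall>y\<in>P. \<forall>z\<in>P. le x y \<and> le y z \<longrightarrow> le x z)"

end

theory Submission
  imports Defs
begin

lemma nbhd_empty:
  assumes "generate_topology_on
     {basic_open P F G | F G. finite F \<and> finite G \<and> F \<subseteq> P \<and> G \<subseteq> P} T"
    and "{} \<in> T"
  shows "\<exists>G. finite G \<and> G \<subseteq> P \<and> basic_open P {} G \<subseteq> T"
  using assms
proof (induction rule: generate_topology_on.induct)
  case Empty
  then show ?case by simp
next
  case (Int a b)
  then obtain G1 G2 where g: "finite G1" "G1 \<subseteq> P" "basic_open P {} G1 \<subseteq> a"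
    "finite G2" "G2 \<subseteq> P" "basic_open P {} G2 \<subseteq> b" by auto
  have "basic_open P {} (G1 \<union> G2) \<subseteq> a \<inter> b"
    using g unfolding basic_open_def by blast
  moreover have "finite (G1 \<union> G2)" "G1 \<union> G2 \<subseteq> P" using g by auto
  ultimately show ?case by blast
next
  case (UN K)
  then obtain k where "k \<in> K" "{} \<in> k" by auto
  then obtain G where "finite G" "G \<subseteq> P" "basic_open P {} G \<subseteq> k"
    using UN.IH by blast
  then show ?case using \<open>k \<in> K\<close> by blast
next
  case (Basis s)
  then obtain F G where s: "s = basic_open P F G" "finite G" "G \<subseteq> P" by auto
  with Basis have "F = {}" unfolding basic_open_def by auto
  with s show ?case by blast
qed

theorem lemma3p1:
  fixes P :: "'a set" and le :: "'a \<Rightarrow> 'a \<Rightarrow> bool"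
  assumes "is_poset P le"
  shows "{} \<notin> (powerset_topology P) closure_of (down_P P le) \<longleftrightarrow>
         (\<exists>F. finite F \<and> F \<subseteq> P \<and> P = up_set P le F)"
proof
  assume h: "{} \<notin> (powerset_topology P) closure_of (down_P P le)"
  have top: "{} \<in> topspace (powerset_topology P)"
    unfolding powerset_topology_def topology_generated_by_topspace
  proof (rule UnionI[of "basic_open P {} {}"])
    show "basic_open P {} {} \<in> {basic_open P F G | F G. finite F \<and> finite G \<and> F \<subseteq> P \<and> G \<subseteq> P}"
      by blast
  qed (simp add: basic_open_def)
  from h top obtain T where T: "{} \<in> T" "openin (powerset_topology P) T"
     "\<forall>y\<in>down_P P le. y \<notin> T"
    unfolding in_closure_of by auto
  from T(2) have "generate_topology_on
     {basic_open P F G | F G. finite F \<and> finite G \<and> F \<subseteq> P \<and> G \<subseteq> P} T"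
    unfolding powerset_topology_def openin_topology_generated_by_iff .
  from nbhd_empty[OF this T(1)] obtain G where G: "finite G" "G \<subseteq> P"
    "basic_open P {} G \<subseteq> T" by auto
  have "P \<subseteq> up_set P le G"
  proof
    fix x assume x: "x \<in> P"
    have "down_set P le x \<in> down_P P le" using x by (simp add: down_P_def)
    then have "down_set P le x \<notin> basic_open P {} G" using T(3) G(3) by auto
    then obtain g where "g \<in> G" "g \<in> down_set P le x"
      unfolding basic_open_def down_set_def by auto
    then show "x \<in> up_set P le G" using x unfolding up_set_def down_set_def by auto
  qed
  then show "\<exists>F. finite F \<and> F \<subseteq> P \<and> P = up_set P le F"
    using G by (intro exI[of _ G]) (auto simp: up_set_def)
next
  assume "\<exists>F. finite F \<and> F \<subseteq> P \<and> P = up_set P le F"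
  then obtain G where G: "finite G" "G \<subseteq> P" "P = up_set P le G" by auto
  have op: "openin (powerset_topology P) (basic_open P {} G)"
    unfolding powerset_topology_def
    by (rule topology_generated_by_Basis) (use G in auto)
  have e: "{} \<in> basic_open P {} G" by (simp add: basic_open_def)
  have d: "\<forall>y\<in>down_P P le. y \<notin> basic_open P {} G"
  proof
    fix y assume "y \<in> down_P P le"
    then obtain x where x: "x \<in> P" "y = down_set P le x" by (auto simp: down_P_def)
    then obtain g where "g \<in> G" "le g x" using G(3) unfolding up_set_def by blast
    then have "g \<in> G \<inter> y" using x G(2) by (auto simp: down_set_def)
    then show "y \<notin> basic_open P {} G" by (auto simp: basic_open_def)
  qed
  show "{} \<notin> (powerset_topology P) closure_of (down_P P le)"
    unfolding in_closure_of using op e d by blast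
qed

end
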